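(* Let $T>0$, $c>0$, let $U\subseteq\mathbb{R}^k$, and let $f:[0,T]\times\mathbb{R}^n\times U\to\mathbb{R}^n$ be continuous and continuously differentiable in its second argument. Let $\|\cdot\|$ be a norm on $\mathbb{R}^n$ with dual norm $\|\cdot\|_\star$. Consider the system $\dot x(t)=f(t,x(t),u(t))$ and its adjoint (costate) system $\dot\lambda(t)=-D_xf(t,x(t),u(t))^\top\lambda(t)-v(t)$ on $[0,T]$, with inputs $x(t)\in\mathbb{R}^n$, $u(t)\in U$, $v(t)\in\mathbb{R}^n$, and let $\Lambda^{\leftarrow}(t)=\lambda(T-t)$ be the time-reversed costate, which satisfies $\dot{\Lambda}^{\leftarrow}(t)=D_xf(T-t,x(T-t),u(T-t))^\top\Lambda^{\leftarrow}(t)+v(T-t)$. The following are equivalent: (i) the $x$-system is strongly infinitesimally contracting with respect to $\|\cdot\|$ with rate $c$, i.e. for all $t\in[0,T]$ and $\tilde u\in U$, the one-sided Lipschitz constant of $x\mapsto f(t,x,\tilde u)$ with respect to $\|\cdot\|$ is at most $-c$; (ii) the $\Lambda^{\leftarrow}$-system is strongly infinitesimally contracting with respect to $\|\cdot\|_\star$ with rate $c$, i.e. for all $t\in[0,T]$, $\xi\in\mathbb{R}^n$, $\tilde u\in U$, $w\in\mathbb{R}^n$, the one-sided Lipschitz constant of $\Lambda\mapsto D_xf(T-t,\xi,\tilde u)^\top\Lambda+w$ with respect to $\|\cdot\|_\star$ is at most $-c$.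
   Context: The dual norm is $\|z\|_\star=\sup_{\|y\|\le1}y^\top z$. For a matrix $A$ and a norm $\|\cdot\|$, the induced norm is $\|A\|=\sup_{\|x\|=1}\|Ax\|$ and the logarithmic norm is $\mu(A)=\lim_{h\to0^+}(\|I_n+hA\|-1)/h$. For a continuously differentiable $F:\mathbb{R}^n\to\mathbb{R}^n$, its one-sided Lipschitz constant with respect to a norm is $\sup_{x\in\mathbb{R}^n}\mu(DF(x))$, with $\mu$ computed in that norm. *)

theory Defs
  imports "HOL-Analysis.Analysis"
begin

definition is_norm :: "('a::real_vector \<Rightarrow> real) \<Rightarrow> bool" where
  "is_norm N \<longleftrightarrow> (\<forall>x. 0 \<le> N x) \<and> (\<forall>x. N x = 0 \<longleftrightarrow> x = 0)
     \<and> (\<forall>a x. N (a *\<^sub>R x) = \<bar>a\<bar> * N x) \<and> (\<forall>x y. N (x + y) \<le> N x + N y)"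

definition dual_norm :: "(real^'n \<Rightarrow> real) \<Rightarrow> real^'n \<Rightarrow> real" where
  "dual_norm N z = Sup {y \<bullet> z | y. N y \<le> 1}"

definition induced_norm :: "(real^'n \<Rightarrow> real) \<Rightarrow> real^'n^'n \<Rightarrow> real" where
  "induced_norm N A = Sup {N (A *v x) | x. N x = 1}"

definition log_norm :: "(real^'n \<Rightarrow> real) \<Rightarrow> real^'n^'n \<Rightarrow> real" where
  "log_norm N A = Lim (at_right 0) (\<lambda>h. (induced_norm N (mat 1 + h *\<^sub>R A) - 1) / h)"

definition jac :: "(real^'n \<Rightarrow> real^'m) \<Rightarrow> real^'n \<Rightarrow> real^'n^'m" where
  "jac F x = matrix (frechet_derivative F (at x))"

text \<open>One-sided Lipschitz constant \<open>sup_x \<mu>(DF(x))\<close>, taken in the extended reals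
  so that the supremum is always meaningful.\<close>
definition osL :: "(real^'n \<Rightarrow> real) \<Rightarrow> (real^'n \<Rightarrow> real^'n) \<Rightarrow> ereal" where
  "osL N F = (SUP x. ereal (log_norm N (jac F x)))"

end

theory Submission
  imports Defs
begin


lemma normD:
  assumes "is_norm N"
  shows "N x \<ge> 0" "N x = 0 \<longleftrightarrow> x = 0" "N (a *\<^sub>R x) = \<bar>a\<bar> * N x" "N (x + y) \<le> N x + N y"
  using assms unfolding is_norm_def by auto

lemma normN_0: "is_norm N \<Longrightarrow> N 0 = 0" using normD(2) by blast

lemma normN_minus: "is_norm N \<Longrightarrow> N (-x) = N x"
  using normD(3)[of N "-1" x] by simp

lemma normN_sum: assumes "is_norm N" shows "N (sum g S) \<le> (\<Sum>i\<in>S. N (g i))"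
proof (induction S rule: infinite_finite_induct)
  case (infinite A) then show ?case using normN_0[OF assms] by simp
next
  case empty then show ?case using normN_0[OF assms] by simp
next
  case (insert x F)
  then show ?case using normD(4)[OF assms, of "g x" "sum g F"] by simp
qed

lemma normN_upper:
  fixes N :: "real^'n \<Rightarrow> real"
  assumes "is_norm N"
  obtains C where "C > 0" "\<And>x. N x \<le> C * norm x"
proof -
  define C where "C = 1 + (\<Sum>i\<in>UNIV. N (axis i (1::real)))"
  have Cpos: "C > 0" unfolding C_def using normD(1)[OF assms]
    by (simp add: sum_nonneg add_pos_nonneg)
  have "N x \<le> C * norm x" for x
  proof -
    have "x = (\<Sum>i\<in>UNIV. x $ i *\<^sub>R axis i 1)"
      using basis_expansion[of x] by (simp add: scalar_mult_eq_scaleR)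
    then have "N x \<le> (\<Sum>i\<in>UNIV. N (x $ i *\<^sub>R axis i 1))"
      using normN_sum[OF assms] by metis
    also have "\<dots> = (\<Sum>i\<in>UNIV. \<bar>x $ i\<bar> * N (axis i 1))"
      using normD(3)[OF assms] by simp
    also have "\<dots> \<le> (\<Sum>i\<in>UNIV. norm x * N (axis i 1))"
      by (intro sum_mono mult_right_mono component_le_norm_cart normD(1)[OF assms])
    also have "\<dots> = norm x * (C - 1)" by (simp add: C_def sum_distrib_left)
    also have "\<dots> \<le> C * norm x" by (simp add: algebra_simps)
    finally show ?thesis .
  qed
  then show ?thesis using that Cpos by blast
qed

lemma normN_cont:
  fixes N :: "real^'n \<Rightarrow> real"
  assumes "is_norm N"
  shows "continuous_on S N"
proof -
  obtain C where C: "C > 0" "\<And>x. N x \<le> C * norm x" using normN_upper[OF assms] by blast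
  have lip: "\<bar>N x - N y\<bar> \<le> C * dist x y" for x y
  proof -
    have "N x \<le> N y + N (x - y)" using normD(4)[OF assms, of y "x - y"] by simp
    moreover have "N y \<le> N x + N (y - x)" using normD(4)[OF assms, of x "y - x"] by simp
    moreover have "N (y - x) = N (x - y)" using normN_minus[OF assms, of "x - y"] by simp
    ultimately show ?thesis using C(2)[of "x - y"] by (simp add: dist_norm)
  qed
  show ?thesis unfolding continuous_on_iff
  proof (intro ballI allI impI)
    fix x and e :: real assume "x \<in> S" "0 < e"
    show "\<exists>d>0. \<forall>x'\<in>S. dist x' x < d \<longrightarrow> dist (N x') (N x) < e"
    proof (intro exI[of _ "e / C"] conjI ballI impI)
      show "e / C > 0" using C \<open>0 < e\<close> by simp
      fix x' assume "dist x' x < e / C"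
      then have "C * dist x' x < e" using C by (simp add: field_simps)
      then show "dist (N x') (N x) < e" using lip[of x' x] by (simp add: dist_real_def)
    qed
  qed
qed

lemma normN_lower:
  fixes N :: "real^'n \<Rightarrow> real"
  assumes "is_norm N"
  obtains m where "m > 0" "\<And>x. m * norm x \<le> N x"
proof -
  have "axis undefined (1::real) \<in> sphere (0::real^'n) 1" by simp
  then have ne: "sphere (0::real^'n) 1 \<noteq> {}" by blast
  obtain x0 where x0: "x0 \<in> sphere 0 1" "\<And>y. y \<in> sphere 0 1 \<Longrightarrow> N x0 \<le> N y"
    using continuous_attains_inf[OF compact_sphere ne normN_cont[OF assms]] by blast
  have "x0 \<noteq> 0" using x0(1) by auto
  then have mpos: "N x0 > 0" using normD(1,2)[OF assms, of x0] by auto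
  have "N x0 * norm x \<le> N x" for x
  proof (cases "x = 0")
    case True then show ?thesis by (simp add: normN_0[OF assms])
  next
    case False
    then have "(1 / norm x) *\<^sub>R x \<in> sphere 0 1" by simp
    then have "N x0 \<le> N ((1 / norm x) *\<^sub>R x)" by (rule x0(2))
    also have "\<dots> = N x / norm x" using normD(3)[OF assms] by simp
    finally show ?thesis using False by (simp add: field_simps)
  qed
  then show ?thesis using that mpos by blast
qed

lemma dual_bdd:
  fixes N :: "real^'n \<Rightarrow> real"
  assumes "is_norm N"
  shows "bdd_above {y \<bullet> z | y. N y \<le> 1}"
proof -
  obtain m where m: "m > 0" "\<And>x. m * norm x \<le> N x" using normN_lower[OF assms] by blast
  have "y \<bullet> z \<le> norm z / m" if "N y \<le> 1" for y
  proof -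
    have ny: "norm y \<le> 1 / m" using m(2)[of y] that m(1) by (simp add: field_simps)
    have "y \<bullet> z \<le> norm y * norm z" by (rule norm_cauchy_schwarz)
    also have "\<dots> \<le> (1/m) * norm z" by (intro mult_right_mono ny) auto
    finally show ?thesis by simp
  qed
  then show ?thesis unfolding bdd_above_def by blast
qed

lemma dual_upper:
  fixes N :: "real^'n \<Rightarrow> real"
  assumes "is_norm N" "N y \<le> 1"
  shows "y \<bullet> z \<le> dual_norm N z"
  unfolding dual_norm_def by (rule cSup_upper) (use assms dual_bdd[OF assms(1)] in auto)

lemma dual_least:
  fixes N :: "real^'n \<Rightarrow> real"
  assumes "is_norm N" "\<And>y. N y \<le> 1 \<Longrightarrow> y \<bullet> z \<le> K"
  shows "dual_norm N z \<le> K"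
  unfolding dual_norm_def
proof (rule cSup_least)
  have "N 0 \<le> 1" using normN_0[OF assms(1)] by simp
  then have "0 \<bullet> z \<in> {y \<bullet> z |y. N y \<le> 1}" by blast
  then show "{y \<bullet> z |y. N y \<le> 1} \<noteq> {}" by blast
qed (use assms in auto)

lemma dual_nonneg:
  fixes N :: "real^'n \<Rightarrow> real"
  assumes "is_norm N"
  shows "0 \<le> dual_norm N z"
  using dual_upper[OF assms, of 0 z] normN_0[OF assms] by simp

lemma dual_ineq:
  fixes N :: "real^'n \<Rightarrow> real"
  assumes N: "is_norm N"
  shows "y \<bullet> z \<le> dual_norm N z * N y"
proof (cases "y = 0")
  case True then show ?thesis using normN_0[OF N] by simp
next
  case False
  then have a: "N y > 0" using normD(1,2)[OF N, of y] by auto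
  have "N ((1 / N y) *\<^sub>R y) = 1" using a normD(3)[OF N, of "1 / N y" y] by simp
  then have "((1 / N y) *\<^sub>R y) \<bullet> z \<le> dual_norm N z" using dual_upper[OF N] by (metis order_refl)
  then have "(y \<bullet> z) / N y \<le> dual_norm N z" by simp
  then show ?thesis using a by (simp add: field_simps)
qed

lemma dual_scale_le:
  fixes N :: "real^'n \<Rightarrow> real"
  assumes N: "is_norm N" and a: "a \<ge> 0"
  shows "dual_norm N (a *\<^sub>R z) \<le> a * dual_norm N z"
proof (rule dual_least[OF N])
  fix y assume "N y \<le> 1"
  then have "y \<bullet> z \<le> dual_norm N z" by (rule dual_upper[OF N])
  then show "y \<bullet> (a *\<^sub>R z) \<le> a * dual_norm N z" using a by (simp add: mult_left_mono)
qed

lemma dual_scale: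
  fixes N :: "real^'n \<Rightarrow> real"
  assumes N: "is_norm N" and a: "a > 0"
  shows "dual_norm N (a *\<^sub>R z) = a * dual_norm N z"
proof -
  have "dual_norm N z = dual_norm N ((1/a) *\<^sub>R (a *\<^sub>R z))" using a by simp
  also have "\<dots> \<le> (1/a) * dual_norm N (a *\<^sub>R z)" using dual_scale_le[OF N, of "1/a" "a *\<^sub>R z"] a by simp
  finally have "a * dual_norm N z \<le> dual_norm N (a *\<^sub>R z)" using a by (simp add: field_simps)
  then show ?thesis using dual_scale_le[OF N, of a z] a by simp
qed

lemma dual_lowerC:
  fixes N :: "real^'n \<Rightarrow> real"
  assumes N: "is_norm N"
  obtains C where "C > 0" "\<And>z. norm z \<le> C * dual_norm N z"
proof -
  obtain C where C: "C > 0" "\<And>x. N x \<le> C * norm x" using normN_upper[OF N] by blast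
  have "norm z \<le> C * dual_norm N z" for z
  proof (cases "z = 0")
    case True then show ?thesis using dual_nonneg[OF N] C by simp
  next
    case False
    define y where "y = (1 / (C * norm z)) *\<^sub>R z"
    have "N y \<le> C * norm y" by (rule C(2))
    also have "\<dots> = 1" using False C unfolding y_def by simp
    finally have "y \<bullet> z \<le> dual_norm N z" by (rule dual_upper[OF N])
    moreover have "y \<bullet> z = norm z / C" using False C unfolding y_def
      by (simp add: power2_norm_eq_inner[symmetric] power2_eq_square)
    ultimately show ?thesis using C by (simp add: field_simps)
  qed
  then show ?thesis using that C by blast
qed

lemma dual_le_norm:
  fixes N :: "real^'n \<Rightarrow> real"
  assumes N: "is_norm N"
  obtains m where "m > 0" "\<And>z. dual_norm N z \<le> norm z / m"
proof -
  obtain m where m: "m > 0" "\<And>x. m * norm x \<le> N x" using normN_lower[OF N] by blast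
  have "dual_norm N z \<le> norm z / m" for z
  proof (rule dual_least[OF N])
    fix y assume "N y \<le> 1"
    then have ny: "norm y \<le> 1 / m" using m(2)[of y] m(1) by (simp add: field_simps)
    have "y \<bullet> z \<le> norm y * norm z" by (rule norm_cauchy_schwarz)
    also have "\<dots> \<le> (1/m) * norm z" by (intro mult_right_mono ny) auto
    finally show "y \<bullet> z \<le> norm z / m" by simp
  qed
  then show ?thesis using that m by blast
qed



lemma dual_HB:
  fixes N :: "real^'n \<Rightarrow> real"
  assumes N: "is_norm N"
  shows "\<exists>z. dual_norm N z \<le> 1 \<and> z \<bullet> x = N x"
proof (cases "x = 0")
  case True
  have "dual_norm N 0 \<le> 1" by (rule dual_least[OF N]) simp
  then show ?thesis using True normN_0[OF N] by (intro exI[of _ 0]) simp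
next
  case False
  define S where "S = {y. N y \<le> 1}"
  have Nxpos: "N x > 0" using False normD(1,2)[OF N, of x] by auto
  define x0 where "x0 = (1 / N x) *\<^sub>R x"
  have Nx0: "N x0 = 1" unfolding x0_def using Nxpos normD(3)[OF N, of "1 / N x" x] by simp
  have xx0: "x = N x *\<^sub>R x0" unfolding x0_def using Nxpos by simp
  have x0ne: "x0 \<noteq> 0" using Nx0 normN_0[OF N] by auto
  have convS: "convex S"
    unfolding S_def convex_def
  proof (intro allI impI ballI, clarify)
    fix y1 y2 :: "real^'n" and u v :: real
    assume h: "N y1 \<le> 1" "N y2 \<le> 1" "0 \<le> u" "0 \<le> v" "u + v = 1"
    have "N (u *\<^sub>R y1 + v *\<^sub>R y2) \<le> N (u *\<^sub>R y1) + N (v *\<^sub>R y2)" by (rule normD(4)[OF N])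
    also have "\<dots> = u * N y1 + v * N y2" using normD(3)[OF N] h by simp
    also have "\<dots> \<le> u * 1 + v * 1" using h by (intro add_mono mult_left_mono) auto
    finally show "N (u *\<^sub>R y1 + v *\<^sub>R y2) \<le> 1" using h by simp
  qed
  have x0S: "x0 \<in> S" unfolding S_def using Nx0 by simp
  have zeroS: "0 \<in> S" unfolding S_def using normN_0[OF N] by simp
  have notri: "x0 \<notin> rel_interior S"
  proof
    assume "x0 \<in> rel_interior S"
    then have "\<exists>e. e > 0 \<and> ball x0 e \<inter> affine hull S \<subseteq> S"
      unfolding mem_rel_interior_ball by (elim conjE)
    then obtain e where e: "e > 0" "ball x0 e \<inter> affine hull S \<subseteq> S"
      by (elim exE conjE)
    define t where "t = e / (2 * norm x0)"
    have tpos: "t > 0" unfolding t_def using e x0ne by simp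
    define p where "p = (1 + t) *\<^sub>R x0"
    have peq: "p = (1 + t) *\<^sub>R x0 + (- t) *\<^sub>R 0" unfolding p_def by simp
    have "x0 \<in> affine hull S" "0 \<in> affine hull S" using x0S zeroS by (auto intro: hull_inc)
    then have "p \<in> affine hull S"
      unfolding peq by (intro mem_affine[OF affine_affine_hull]) auto
    moreover have "dist x0 p < e"
    proof -
      have "x0 - p = (- t) *\<^sub>R x0" unfolding p_def by (simp add: algebra_simps)
      then have "dist x0 p = t * norm x0" unfolding dist_norm using tpos by simp
      also have "\<dots> = e / 2" unfolding t_def using x0ne by simp
      finally show ?thesis using e by simp
    qed
    ultimately have "p \<in> S" using e(2) by auto
    moreover have "N p = 1 + t" unfolding p_def using normD(3)[OF N, of "1 + t" x0] Nx0 tpos by simp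
    ultimately show False unfolding S_def using tpos by simp
  qed
  have "\<exists>a. a \<noteq> 0 \<and> (\<forall>y\<in>S. a \<bullet> x0 \<le> a \<bullet> y)"
    by (rule supporting_hyperplane_rel_boundary[OF convS x0S notri]) blast
  then obtain a where a: "a \<noteq> 0" "\<And>y. y \<in> S \<Longrightarrow> a \<bullet> x0 \<le> a \<bullet> y"
    by blast
  define z0 where "z0 = - a"
  have z0ne: "z0 \<noteq> 0" using a(1) unfolding z0_def by simp
  have z0le: "z0 \<bullet> y \<le> z0 \<bullet> x0" if "y \<in> S" for y using a(2)[OF that] unfolding z0_def by simp
  obtain C where C: "C > 0" "\<And>x. N x \<le> C * norm x" using normN_upper[OF N] by blast
  define y1 where "y1 = (1 / (C * norm z0)) *\<^sub>R z0"
  have "N y1 \<le> C * norm y1" by (rule C(2))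
  also have "\<dots> = 1" using z0ne C unfolding y1_def by simp
  finally have y1S: "y1 \<in> S" unfolding S_def by simp
  have "z0 \<bullet> y1 = norm z0 / C" using z0ne C unfolding y1_def
    by (simp add: power2_norm_eq_inner[symmetric] power2_eq_square)
  moreover have "norm z0 / C > 0" using z0ne C by simp
  ultimately have spos: "z0 \<bullet> x0 > 0" using z0le[OF y1S] by linarith
  define z where "z = (1 / (z0 \<bullet> x0)) *\<^sub>R z0"
  have "dual_norm N z \<le> 1"
  proof (rule dual_least[OF N])
    fix y assume "N y \<le> 1"
    then have "z0 \<bullet> y \<le> z0 \<bullet> x0" using z0le unfolding S_def by simp
    then show "y \<bullet> z \<le> 1" unfolding z_def using spos by (simp add: inner_commute field_simps)
  qed
  moreover have "z \<bullet> x = N x" unfolding z_def using spos by (subst xx0) simp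
  ultimately show ?thesis by blast
qed

lemma ind_upper:
  assumes "bdd_above {P (B *v x) | x. P x = 1}" "P x = 1"
  shows "P (B *v x) \<le> induced_norm P B"
  unfolding induced_norm_def by (rule cSup_upper) (use assms in auto)

lemma ind_least:
  assumes "\<exists>x. P x = 1" "\<And>x. P x = 1 \<Longrightarrow> P (B *v x) \<le> K"
  shows "induced_norm P B \<le> K"
  unfolding induced_norm_def by (rule cSup_least) (use assms in auto)

lemma transpose_mv:
  fixes B :: "real^'n^'m"
  shows "(transpose B *v z) \<bullet> x = z \<bullet> (B *v x)"
  by (metis dot_lmul_matrix transpose_transpose vector_transpose_matrix)



lemma ind_transpose:
  fixes N :: "real^'n \<Rightarrow> real" and B :: "real^'n^'n"
  assumes N: "is_norm N"
  shows "induced_norm (dual_norm N) (transpose B) = induced_norm N B"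
proof -
  let ?D = "dual_norm N"
  obtain C where C: "C > 0" "\<And>x. N x \<le> C * norm x" using normN_upper[OF N] by blast
  obtain m where m: "m > 0" "\<And>x. m * norm x \<le> N x" using normN_lower[OF N] by blast
  obtain C' where C': "C' > 0" "\<And>z. norm z \<le> C' * ?D z" using dual_lowerC[OF N] by blast
  obtain m' where m': "m' > 0" "\<And>z. ?D z \<le> norm z / m'" using dual_le_norm[OF N] by blast
  obtain K where K: "K > 0" "\<And>x. norm (B *v x) \<le> norm x * K"
    using bounded_linear.pos_bounded[OF matrix_vector_mul_bounded_linear[of B]] by blast
  obtain K' where K': "K' > 0" "\<And>x. norm (transpose B *v x) \<le> norm x * K'"
    using bounded_linear.pos_bounded[OF matrix_vector_mul_bounded_linear[of "transpose B"]] by blast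
  define e :: "real^'n" where "e = axis undefined 1"
  have "e \<noteq> 0" unfolding e_def by (metis norm_axis_1 norm_zero zero_neq_one)
  then have Ne: "N e > 0" using normD(1,2)[OF N, of e] by auto
  define x1 where "x1 = (1 / N e) *\<^sub>R e"
  have Nx1: "N x1 = 1" unfolding x1_def using Ne normD(3)[OF N, of "1 / N e" e] by simp
  obtain z1 where z1: "?D z1 \<le> 1" "z1 \<bullet> x1 = N x1" using dual_HB[OF N] by blast
  have "?D z1 \<ge> 1" using dual_ineq[OF N, of x1 z1] z1 Nx1 by (simp add: inner_commute)
  then have Dz1: "?D z1 = 1" using z1 by simp
  have exN: "\<exists>x. N x = 1" using Nx1 by blast
  have exD: "\<exists>z. ?D z = 1" using Dz1 by blast
  have bddN: "bdd_above {N (B *v x) | x. N x = 1}"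
  proof -
    have "N (B *v x) \<le> C * K / m" if "N x = 1" for x
    proof -
      have nx: "norm x \<le> 1 / m" using m(2)[of x] that m(1) by (simp add: field_simps)
      have "N (B *v x) \<le> C * norm (B *v x)" by (rule C(2))
      also have "\<dots> \<le> C * (norm x * K)" using C K by (intro mult_left_mono) auto
      also have "\<dots> \<le> C * ((1 / m) * K)" using C K nx by (intro mult_left_mono mult_right_mono) auto
      finally show ?thesis by simp
    qed
    then show ?thesis unfolding bdd_above_def by blast
  qed
  have bddD: "bdd_above {?D (transpose B *v z) | z. ?D z = 1}"
  proof -
    have "?D (transpose B *v z) \<le> C' * K' / m'" if "?D z = 1" for z
    proof -
      have nz: "norm z \<le> C'" using C'(2)[of z] that by simp
      have "?D (transpose B *v z) \<le> norm (transpose B *v z) / m'" by (rule m'(2))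
      also have "\<dots> \<le> (norm z * K') / m'" using K' m' by (intro divide_right_mono) auto
      also have "\<dots> \<le> (C' * K') / m'" using K' m' nz by (intro divide_right_mono mult_right_mono) auto
      finally show ?thesis by simp
    qed
    then show ?thesis unfolding bdd_above_def by blast
  qed
  have indN_nonneg: "induced_norm N B \<ge> 0"
    using ind_upper[OF bddN Nx1] normD(1)[OF N] by (meson order_trans)
  have indD_nonneg: "induced_norm ?D (transpose B) \<ge> 0"
    using ind_upper[OF bddD Dz1] dual_nonneg[OF N] by (meson order_trans)
  have Nscale: "N (B *v y) \<le> induced_norm N B * N y" for y
  proof (cases "y = 0")
    case True then show ?thesis using normN_0[OF N] by simp
  next
    case False
    then have a: "N y > 0" using normD(1,2)[OF N, of y] by auto
    have "N ((1 / N y) *\<^sub>R y) = 1" using a normD(3)[OF N, of "1 / N y" y] by simp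
    then have "N (B *v ((1 / N y) *\<^sub>R y)) \<le> induced_norm N B" by (rule ind_upper[OF bddN])
    then have "N (B *v y) / N y \<le> induced_norm N B"
      using normD(3)[OF N] a by (simp add: matrix_vector_mult_scaleR)
    then show ?thesis using a by (simp add: field_simps)
  qed
  have Dscale: "?D (transpose B *v z) \<le> induced_norm ?D (transpose B)" if "?D z \<le> 1" for z
  proof (cases "z = 0")
    case True
    have "?D 0 \<le> 0" by (rule dual_least[OF N]) simp
    then show ?thesis using True indD_nonneg by simp
  next
    case False
    then have "0 < C' * ?D z" using C'(2)[of z] by (meson zero_less_norm_iff order_less_le_trans) 
    then have a: "?D z > 0" using C'(1) by (simp add: zero_less_mult_iff)
    have "?D ((1 / ?D z) *\<^sub>R z) = 1" using a dual_scale[OF N, of "1 / ?D z" z] by simp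
    then have "?D (transpose B *v ((1 / ?D z) *\<^sub>R z)) \<le> induced_norm ?D (transpose B)"
      by (rule ind_upper[OF bddD])
    then have "?D (transpose B *v z) / ?D z \<le> induced_norm ?D (transpose B)"
      using dual_scale[OF N, of "1 / ?D z"] a by (simp add: matrix_vector_mult_scaleR)
    then have "?D (transpose B *v z) \<le> ?D z * induced_norm ?D (transpose B)"
      using a by (simp add: field_simps)
    also have "\<dots> \<le> induced_norm ?D (transpose B)"
      using that indD_nonneg mult_right_mono[of "?D z" 1 "induced_norm ?D (transpose B)"] by simp
    finally show ?thesis .
  qed
  have le1: "induced_norm ?D (transpose B) \<le> induced_norm N B"
  proof (rule ind_least[OF exD])
    fix z assume z: "?D z = 1"
    show "?D (transpose B *v z) \<le> induced_norm N B"
    proof (rule dual_least[OF N])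
      fix y assume y: "N y \<le> 1"
      have "y \<bullet> (transpose B *v z) = (B *v y) \<bullet> z"
        using transpose_mv[of B z y] by (simp add: inner_commute)
      also have "\<dots> \<le> ?D z * N (B *v y)" by (rule dual_ineq[OF N])
      also have "\<dots> = N (B *v y)" using z by simp
      also have "\<dots> \<le> induced_norm N B * N y" by (rule Nscale)
      also have "\<dots> \<le> induced_norm N B" using y indN_nonneg by (simp add: mult_left_le)
      finally show "y \<bullet> (transpose B *v z) \<le> induced_norm N B" .
    qed
  qed
  have le2: "induced_norm N B \<le> induced_norm ?D (transpose B)"
  proof (rule ind_least[OF exN])
    fix x assume x: "N x = 1"
    obtain z where z: "?D z \<le> 1" "z \<bullet> (B *v x) = N (B *v x)" using dual_HB[OF N] by blast
    have "N (B *v x) = (transpose B *v z) \<bullet> x" using z(2) transpose_mv[of B z x] by simp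
    also have "\<dots> \<le> ?D (transpose B *v z) * N x"
      using dual_ineq[OF N, of x "transpose B *v z"] by (simp add: inner_commute)
    also have "\<dots> = ?D (transpose B *v z)" using x by simp
    also have "\<dots> \<le> induced_norm ?D (transpose B)" by (rule Dscale[OF z(1)])
    finally show "N (B *v x) \<le> induced_norm ?D (transpose B)" .
  qed
  show ?thesis using le1 le2 by simp
qed



lemma transpose_I: "transpose (mat 1 + h *\<^sub>R (A::real^'n^'n)) = mat 1 + h *\<^sub>R transpose A"
  by (simp add: vec_eq_iff transpose_def mat_def)

lemma log_norm_transpose:
  fixes N :: "real^'n \<Rightarrow> real"
  assumes N: "is_norm N"
  shows "log_norm (dual_norm N) (transpose A) = log_norm N A"
proof -
  have "\<And>h. induced_norm (dual_norm N) (mat 1 + h *\<^sub>R transpose A) = induced_norm N (mat 1 + h *\<^sub>R A)"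
    by (metis transpose_I ind_transpose[OF N])
  then show ?thesis unfolding log_norm_def by simp
qed

lemma jac_affine: "jac (\<lambda>\<Lambda>. M *v \<Lambda> + w) x = (M::real^'n^'n)"
proof -
  have "((\<lambda>\<Lambda>. M *v \<Lambda> + w) has_derivative (\<lambda>\<Lambda>. M *v \<Lambda>)) (at x)"
    by (intro has_derivative_add_const bounded_linear_imp_has_derivative matrix_vector_mul_bounded_linear)
  then have "frechet_derivative (\<lambda>\<Lambda>. M *v \<Lambda> + w) (at x) = (\<lambda>\<Lambda>. M *v \<Lambda>)"
    by (simp add: frechet_derivative_at[symmetric])
  then show ?thesis unfolding jac_def by (simp add: matrix_of_matrix_vector_mul)
qed

lemma osL_affine: "osL P (\<lambda>\<Lambda>. M *v \<Lambda> + w) = ereal (log_norm P M)"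
  unfolding osL_def jac_affine by simp

theorem theorem3:
  fixes f :: "real \<Rightarrow> real^'n \<Rightarrow> real^'k \<Rightarrow> real^'n"
    and U :: "(real^'k) set" and T c :: real and N :: "real^'n \<Rightarrow> real"
  assumes T: "T > 0" and c: "c > 0"
    and N: "is_norm N"
    and f_cont: "continuous_on ({0..T} \<times> UNIV \<times> U) (\<lambda>(t, x, u). f t x u)"
    and f_diff: "\<And>t x u. t \<in> {0..T} \<Longrightarrow> u \<in> U \<Longrightarrow> (\<lambda>y. f t y u) differentiable (at x)"
    and Df_cont: "continuous_on ({0..T} \<times> UNIV \<times> U) (\<lambda>(t, x, u). jac (\<lambda>y. f t y u) x)"
  shows "(\<forall>t\<in>{0..T}. \<forall>u\<in>U. osL N (\<lambda>x. f t x u) \<le> ereal (- c))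
     \<longleftrightarrow> (\<forall>t\<in>{0..T}. \<forall>\<xi>. \<forall>u\<in>U. \<forall>w.
            osL (dual_norm N) (\<lambda>\<Lambda>. transpose (jac (\<lambda>y. f (T - t) y u) \<xi>) *v \<Lambda> + w) \<le> ereal (- c))"
proof -
  let ?J = "\<lambda>t u x. jac (\<lambda>y. f t y u) x"
  have L: "osL N (\<lambda>x. f t x u) \<le> ereal (- c) \<longleftrightarrow> (\<forall>x. log_norm N (?J t u x) \<le> - c)" for t u
    unfolding osL_def by (simp add: SUP_le_iff)
  have R: "osL (dual_norm N) (\<lambda>\<Lambda>. transpose (?J t u \<xi>) *v \<Lambda> + w) \<le> ereal (- c)
       \<longleftrightarrow> log_norm N (?J t u \<xi>) \<le> - c" for t u \<xi> w
    unfolding osL_affine log_norm_transpose[OF N] by simp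
  show ?thesis
    unfolding L R
  proof (intro iffI ballI allI)
    fix t u \<xi> w assume H: "\<forall>t\<in>{0..T}. \<forall>u\<in>U. \<forall>x. log_norm N (?J t u x) \<le> - c"
      and t: "t \<in> {0..T}" and u: "u \<in> U"
    have "T - t \<in> {0..T}" using t by auto
    then show "log_norm N (?J (T - t) u \<xi>) \<le> - c" using H u by blast
  next
    fix t u x assume H: "\<forall>t\<in>{0..T}. \<forall>\<xi>. \<forall>u\<in>U. \<forall>w::real^'n. log_norm N (?J (T - t) u \<xi>) \<le> - c"
      and t: "t \<in> {0..T}" and u: "u \<in> U"
    have "T - t \<in> {0..T}" using t by auto
    then have "log_norm N (?J (T - (T - t)) u x) \<le> - c" using H u by blast
    then show "log_norm N (?J t u x) \<le> - c" by simp
  qed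
qed

end
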